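(* Let $n$ and $k$ be integers with $n\ge 1$. Then $$\mathfrak C_{2n}^{(k)}=\sum_{m=1}^{n}\frac{(-4)^{n-m}}{(2m+1)^k}\left[\!\!\left[n\atop m\right]\!\!\right],$$ where for $m=1,2,\dots,n$ $$\left[\!\!\left[n\atop m\right]\!\!\right]=\left[n\atop m\right]^2-2\left[n\atop m-1\right]\left[n\atop m+1\right]+2\left[n\atop m-2\right]\left[n\atop m+2\right]-\cdots+2(-1)^{m-1}\left[n\atop 1\right]\left[n\atop 2m-1\right],$$ that is, $\left[\!\!\left[n\atop m\right]\!\!\right]=\left[n\atop m\right]^2+2\sum_{j=1}^{m-1}(-1)^j\left[n\atop m-j\right]\left[n\atop m+j\right]$, and $\left[\!\!\left[n\atop 0\right]\!\!\right]=0$.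
   Context: For an integer $k$, the polylogarithm factorial function with level $2$ is ${\rm Lif}_{2,k}(z)=\sum_{m=0}^\infty\frac{z^{2m}}{(2m)!(2m+1)^k}$, and the poly-Cauchy numbers with level $2$, $\mathfrak C_n^{(k)}$, are defined by the generating function ${\rm Lif}_{2,k}({\rm arcsinh}\,t)=\sum_{n=0}^\infty\mathfrak C_n^{(k)}\frac{t^n}{n!}$, where ${\rm arcsinh}$ is the inverse hyperbolic sine. Here $\left[n\atop m\right]$ denotes the unsigned Stirling numbers of the first kind, defined by $x(x+1)\cdots(x+n-1)=\sum_{m=0}^n\left[n\atop m\right]x^m$, with $\left[n\atop m\right]=0$ for $m>n$. *)

theory Defs
  imports "HOL-Analysis.Analysis" "HOL-Combinatorics.Stirling"
begin

definition Lif2 :: "int \<Rightarrow> real \<Rightarrow> real" where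
  "Lif2 k z = (\<Sum>m. z ^ (2*m) / (fact (2*m) * (real (2*m+1)) powi k))"

text \<open>Poly-Cauchy numbers with level 2: n! times the n-th Taylor coefficient at 0
  of Lif2 k (arsinh t), i.e. the n-th derivative at 0.\<close>
definition polyCauchy2 :: "nat \<Rightarrow> int \<Rightarrow> real" where
  "polyCauchy2 n k = (deriv ^^ n) (\<lambda>t. Lif2 k (arsinh t)) 0"

definition dstirling :: "nat \<Rightarrow> nat \<Rightarrow> int" where
  "dstirling n m = (if m = 0 then 0 else
     int (stirling n m) ^ 2 +
     2 * (\<Sum>j=1..m-1. (-1) ^ j * int (stirling n (m-j)) * int (stirling n (m+j))))"

end

theory Submission
  imports Defs "HOL-Complex_Analysis.Complex_Analysis"
begin


fun AA :: "nat \<Rightarrow> nat \<Rightarrow> int" where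
  "AA 0 m = (if m = 0 then 1 else 0)"
| "AA (Suc n) m = (if m = 0 then 0 else AA n (m-1)) - 4 * int n ^ 2 * AA n m"

lemma AA_gt: "m > n \<Longrightarrow> AA n m = 0"
  by (induction n arbitrary: m) auto

lemma AA_0: "n \<ge> 1 \<Longrightarrow> AA n 0 = 0"
proof (induction n)
  case (Suc n) thus ?case by (cases n) auto
qed simp

definition UU :: "nat \<Rightarrow> int poly" where
  "UU n = pochhammer [:0,1:] n * pochhammer [:0,-1:] n"

lemma UU_Suc: "UU (Suc n) = UU n * [:int n ^ 2, 0, -1:]"
proof -
  have "([:0,1:] + of_nat n) * ([:0,-1:] + of_nat n) = ([:int n ^ 2, 0, -1:] :: int poly)"
    by (simp add: of_nat_poly power2_eq_square algebra_simps)
  moreover have "UU (Suc n) = UU n * (([:0,1:] + of_nat n) * ([:0,-1:] + of_nat n))"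
    unfolding UU_def pochhammer_Suc by (simp only: mult_ac)
  ultimately show ?thesis by simp
qed

lemma coeff_UU_Suc: "coeff (UU (Suc n)) p = int n ^ 2 * coeff (UU n) p - (if p \<ge> 2 then coeff (UU n) (p - 2) else 0)"
proof -
  have "UU n * [:int n ^ 2, 0, -1:] = smult (int n ^ 2) (UU n) - pCons 0 (pCons 0 (UU n))"
    by (simp add: mult_pCons_right algebra_simps)
  thus ?thesis unfolding UU_Suc
    by (cases p; cases "p - 1") (auto simp: coeff_pCons split: nat.splits)
qed

lemma AA_UU: "4 ^ m * AA n m = (-4) ^ n * coeff (UU n) (2*m)"
proof (induction n arbitrary: m)
  case 0
  thus ?case by (simp add: UU_def)
next
  case (Suc n)
  show ?case
  proof (cases m)
    case 0
    thus ?thesis using Suc[of 0] by (simp add: coeff_UU_Suc)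
  next
    case (Suc m')
    have "4 ^ m * AA (Suc n) m = 4 * (4 ^ m' * AA n m') - 4 * int n ^ 2 * (4 ^ m * AA n m)"
      using Suc by (simp add: algebra_simps)
    also have "\<dots> = (-4) ^ Suc n * coeff (UU (Suc n)) (2*m)"
      unfolding Suc.IH using Suc by (simp add: coeff_UU_Suc algebra_simps)
    finally show ?thesis .
  qed
qed

lemma coeff_poch_pos: "coeff (pochhammer [:0,1:] n) j = int (stirling n j)"
proof -
  have "pochhammer [:0,1:] n = (\<Sum>k\<le>n. of_nat (stirling n k) * [:0,(1::int):] ^ k)"
    by (simp add: stirling_pochhammer)
  also have "\<dots> = (\<Sum>k\<le>n. monom (int (stirling n k)) k)"
    by (intro sum.cong refl) (simp add: monom_altdef of_nat_poly)
  finally show ?thesis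
    by (cases "j \<le> n") (auto simp: coeff_sum)
qed

lemma coeff_poch_neg: "coeff (pochhammer [:0,-1:] n) j = (-1) ^ j * int (stirling n j)"
proof -
  have "pochhammer [:0,-1:] n = (\<Sum>k\<le>n. of_nat (stirling n k) * [:0,(-1::int):] ^ k)"
    by (simp add: stirling_pochhammer)
  also have "\<dots> = (\<Sum>k\<le>n. monom ((-1) ^ k * int (stirling n k)) k)"
  proof (intro sum.cong refl)
    fix k
    have "[:0,(-1::int):] ^ k = monom ((-1)^k) k"
    proof -
      have h: "[:0,(-1::int):] = monom (-1) 1" by (simp add: monom_altdef)
      show ?thesis unfolding h monom_power by simp
    qed
    thus "of_nat (stirling n k) * [:0,(-1::int):] ^ k = monom ((-1) ^ k * int (stirling n k)) k"
      by (simp add: of_nat_poly smult_monom mult.commute)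
  qed
  finally show ?thesis
    by (cases "j \<le> n") (auto simp: coeff_sum)
qed

lemma coeff_UU: "coeff (UU n) p = (\<Sum>i\<le>p. int (stirling n i) * ((-1) ^ (p - i) * int (stirling n (p - i))))"
  by (simp add: UU_def coeff_mult coeff_poch_pos coeff_poch_neg)

lemma fold_sum:
  fixes g :: "nat \<Rightarrow> int"
  shows "(\<Sum>i\<le>2*m. g i) = g m + (\<Sum>j=1..m. g (m - j) + g (m + j))"
proof -
  have "{..2*m} = {..<m} \<union> ({m} \<union> {m+1..2*m})" by auto
  hence "(\<Sum>i\<le>2*m. g i) = sum g ({..<m} \<union> ({m} \<union> {m+1..2*m}))" by simp
  also have "\<dots> = sum g {..<m} + sum g ({m} \<union> {m+1..2*m})"
    by (rule sum.union_disjoint) auto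
  also have "sum g ({m} \<union> {m+1..2*m}) = g m + (\<Sum>i=m+1..2*m. g i)"
    by simp
  also have "(\<Sum>i<m. g i) = (\<Sum>j=1..m. g (m - j))"
    by (rule sum.reindex_bij_witness[of _ "\<lambda>i. m - i" "\<lambda>j. m - j"]) auto
  also have "(\<Sum>i=m+1..2*m. g i) = (\<Sum>j=1..m. g (m + j))"
  proof -
    have "(\<Sum>i=m+1..2*m. g i) = (\<Sum>i=1+m..m+m. g i)" by (simp add: mult_2 add.commute)
    also have "\<dots> = (\<Sum>j=1..m. g (j + m))" by (rule sum.shift_bounds_cl_nat_ivl)
    finally show ?thesis by (simp add: add.commute)
  qed
  finally show ?thesis by (simp add: sum.distrib)
qed

lemma coeff_UU_even:
  assumes "n \<ge> 1" "m \<ge> 1"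
  shows "coeff (UU n) (2*m) = (-1) ^ m * dstirling n m"
proof -
  define s where "s = (\<lambda>i. int (stirling n i))"
  have s0: "s 0 = 0" using assms by (simp add: s_def)
  have "coeff (UU n) (2*m) = (\<Sum>i\<le>2*m. s i * ((-1) ^ (2*m - i) * s (2*m - i)))"
    by (simp add: coeff_UU s_def)
  also have "\<dots> = (-1)^m * s m ^ 2 + (\<Sum>j=1..m. 2 * ((-1)^m * (-1)^j * s (m - j) * s (m + j)))"
    unfolding fold_sum
  proof (intro arg_cong2[where f="(+)"] sum.cong refl)
    show "s m * ((-1) ^ (2*m - m) * s (2*m - m)) = (-1)^m * s m ^ 2"
      by (simp add: power2_eq_square)
  next
    fix j assume j: "j \<in> {1..m}"
    have e1: "2*m - (m - j) = m + j" "2*m - (m + j) = m - j" using j by auto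
    have mj: "m + j = (m - j) + 2*j" using j by auto
    have e2: "((-1::int)) ^ (m - j) = (-1)^m * (-1)^j"
    proof -
      have "((-1::int)) ^ (m + j) = (-1) ^ (m - j)"
        unfolding mj power_add power_mult by simp
      thus ?thesis by (simp add: power_add)
    qed
    have e3: "((-1::int)) ^ (m + j) = (-1)^m * (-1)^j" by (simp add: power_add)
    show "s (m - j) * ((-1) ^ (2*m - (m - j)) * s (2*m - (m - j))) +
          s (m + j) * ((-1) ^ (2*m - (m + j)) * s (2*m - (m + j))) =
          2 * ((-1)^m * (-1)^j * s (m - j) * s (m + j))"
      unfolding e1 e2 e3 by (simp add: algebra_simps)
  qed
  also have "(\<Sum>j=1..m. 2 * ((-1)^m * (-1)^j * s (m - j) * s (m + j))) =
             (\<Sum>j=1..m-1. 2 * ((-1)^m * (-1)^j * s (m - j) * s (m + j)))"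
  proof -
    have "{1..m} = insert m {1..m-1}" using assms by auto
    moreover have "m \<notin> {1..m-1}" by auto
    ultimately show ?thesis using s0 by (simp add: sum.insert)
  qed
  also have "(-1)^m * s m ^ 2 + \<dots> = (-1) ^ m * dstirling n m"
    using assms by (simp add: dstirling_def s_def sum_distrib_left algebra_simps)
  finally show ?thesis .
qed

lemma AA_formula:
  assumes "n \<ge> 1" "m \<ge> 1" "m \<le> n"
  shows "AA n m = (-4) ^ (n - m) * dstirling n m"
proof -
  have "4 ^ m * AA n m = (-4) ^ n * ((-1) ^ m * dstirling n m)"
    using AA_UU[of m n] coeff_UU_even[OF assms(1,2)] by simp
  also have "(-4::int) ^ n = (-4) ^ (n - m) * (-4) ^ m"
    using assms by (simp flip: power_add)
  also have "(-4) ^ (n - m) * (-4) ^ m * ((-1) ^ m * dstirling n m) =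
      (-4) ^ (n - m) * ((-4) ^ m * (-1) ^ m) * dstirling n m"
    by (simp only: mult_ac)
  also have "(-4::int) ^ m * (-1) ^ m = 4 ^ m" by (simp flip: power_mult_distrib)
  finally have "4 ^ m * AA n m = 4 ^ m * ((-4) ^ (n - m) * dstirling n m)"
    by (simp only: mult_ac)
  thus ?thesis by simp
qed



definition Fc :: "(nat \<Rightarrow> complex) \<Rightarrow> complex fps" where
  "Fc c = Abs_fps (\<lambda>n. if even n then c (n div 2) / fact n else 0)"

definition sh :: "(nat \<Rightarrow> complex) \<Rightarrow> nat \<Rightarrow> complex" where
  "sh c m = c (Suc m)"

lemma Fc_nth: "fps_nth (Fc c) n = (if even n then c (n div 2) / fact n else 0)"
  by (simp add: Fc_def)

lemma Fc_deriv2: "fps_deriv (fps_deriv (Fc c)) = Fc (sh c)"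
proof (rule fps_ext)
  fix n
  show "fps_nth (fps_deriv (fps_deriv (Fc c))) n = fps_nth (Fc (sh c)) n"
  proof (cases "even n")
    case True
    then obtain j where j: "n = 2*j" by blast
    have "fact (Suc (Suc (2*j))) = (of_nat (2*j+1) * of_nat (2*j+2) * fact (2*j) :: complex)"
      by (simp add: fact_Suc algebra_simps)
    moreover have "(Suc (Suc (2 * j))) div 2 = Suc j" by simp
    ultimately show ?thesis using j
      by (simp add: Fc_nth sh_def field_simps del: of_nat_Suc fact_Suc)
  next
    case False
    thus ?thesis by (simp add: Fc_nth)
  qed
qed

lemma Fc_radius_sh: "fps_conv_radius (Fc c) > 0 \<Longrightarrow> fps_conv_radius (Fc (sh c)) > 0"
  using fps_conv_radius_deriv[of "Fc c"] fps_conv_radius_deriv[of "fps_deriv (Fc c)"]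
  by (simp add: Fc_deriv2)

definition SS :: "complex \<Rightarrow> complex" where "SS z = (z^2 + 1) powr (1/2)"

lemma arsinh_SS: "arsinh z = Ln (z + SS z)"
  by (simp add: arsinh_def SS_def)

lemma SS_nz: "z^2 + 1 \<noteq> 0 \<Longrightarrow> SS z \<noteq> 0"
  by (simp add: SS_def powr_def)

lemma SS_sq: 
  assumes "z^2 + 1 \<noteq> 0" shows "SS z ^ 2 = z^2 + 1"
proof -
  define L where "L = Ln (z^2+1)"
  have "SS z = exp (L/2)" using assms by (simp add: SS_def powr_def L_def)
  hence "SS z ^ 2 = exp (L/2) * exp (L/2)" by (simp add: power2_eq_square)
  also have "\<dots> = exp (L/2 + L/2)" by (rule exp_add[symmetric])
  also have "L/2 + L/2 = L" by simp
  finally show ?thesis using assms by (simp add: L_def)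
qed

lemma SS_deriv:
  assumes "z^2 + 1 \<notin> \<real>\<^sub>\<le>\<^sub>0"
  shows "(SS has_field_derivative z / SS z) (at z)"
proof -
  have nz: "z^2 + 1 \<noteq> 0" using assms by auto
  have d: "((\<lambda>z. z^2 + 1) has_field_derivative 2 * z) (at z)"
    by (auto intro!: derivative_eq_intros)
  have d: "(SS has_field_derivative ((1/2) * (z^2+1) powr (1/2 - 1)) * (2 * z)) (at z)"
    unfolding SS_def[abs_def] by (rule DERIV_chain2[OF has_field_derivative_powr[OF assms] d])
  have h1: "(z^2+1) powr (1/2 - 1) = SS z / (z^2 + 1)"
  proof -
    define L where "L = Ln (z^2+1)"
    have "(z^2+1) powr (1/2 - 1) = exp (L/2 - L)" using nz
      by (simp add: powr_def L_def algebra_simps)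
    also have "\<dots> = exp (L/2) / exp L" by (rule exp_diff)
    also have "exp L = z^2 + 1" using nz by (simp add: L_def)
    also have "exp (L/2) = SS z" using nz by (simp add: SS_def powr_def L_def)
    finally show ?thesis .
  qed
  have h2: "(1/2) * (SS z / (z^2 + 1)) * (2 * z) = z / SS z"
    using SS_nz[OF nz] unfolding SS_sq[OF nz, symmetric] by (simp add: field_simps power2_eq_square)
  have eq: "((1/2) * (z^2+1) powr (1/2 - 1)) * (2 * z) = z / SS z"
    unfolding h1 by (rule h2)
  show ?thesis using d unfolding eq .
qed

lemma arsinh_deriv:
  assumes "z^2 + 1 \<notin> \<real>\<^sub>\<le>\<^sub>0" "z + SS z \<notin> \<real>\<^sub>\<le>\<^sub>0"
  shows "(arsinh has_field_derivative 1 / SS z) (at z)"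
proof -
  have nz: "z^2 + 1 \<noteq> 0" using assms by auto
  have nz2: "z + SS z \<noteq> 0" using assms(2) by auto
  have "((\<lambda>z. Ln (z + SS z)) has_field_derivative inverse (z + SS z) * (1 + z / SS z)) (at z)"
    by (rule DERIV_chain2[OF has_field_derivative_Ln[OF assms(2)] DERIV_add[OF DERIV_ident SS_deriv[OF assms(1)]]])
  moreover have "inverse (z + SS z) * (1 + z / SS z) = 1 / SS z"
    using SS_nz[OF nz] nz2 by (simp add: field_simps)
  moreover have "(\<lambda>z. Ln (z + SS z)) = arsinh" by (simp add: arsinh_SS fun_eq_iff)
  ultimately show ?thesis by simp
qed

lemma ev_cont:
  assumes "isCont f x" "open S" "f x \<in> S"
  shows "eventually (\<lambda>z. f z \<in> S) (nhds x)"
proof -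
  have "(f \<longlongrightarrow> f x) (at x)" using assms(1) by (simp add: isCont_def)
  hence "eventually (\<lambda>z. f z \<in> S) (at x)" using assms(2,3) by (rule topological_tendstoD)
  thus ?thesis using assms(3) by (simp add: eventually_nhds_conv_at)
qed

lemma Re_pos_not_nonpos: "Re w > 0 \<Longrightarrow> w \<notin> \<real>\<^sub>\<le>\<^sub>0"
  by (simp add: complex_nonpos_Reals_iff)

lemma SS_0: "SS 0 = 1" by (simp add: SS_def)

lemma ev_good: "eventually (\<lambda>z. z^2 + 1 \<notin> \<real>\<^sub>\<le>\<^sub>0 \<and> z + SS z \<notin> \<real>\<^sub>\<le>\<^sub>0) (nhds 0)"
proof -
  have "eventually (\<lambda>z. z^2 + 1 \<in> {w. Re w > 0}) (nhds 0)"
    by (rule ev_cont) (auto intro!: continuous_intros open_halfspace_Re_gt)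
  moreover have "eventually (\<lambda>z. z + SS z \<in> {w. Re w > 0}) (nhds 0)"
  proof (rule ev_cont)
    have "isCont SS 0" 
      by (rule DERIV_isCont[OF SS_deriv]) (simp add: Re_pos_not_nonpos)
    thus "isCont (\<lambda>z. z + SS z) 0" by (intro continuous_intros)
  qed (auto simp: SS_0 open_halfspace_Re_gt)
  ultimately show ?thesis
    by eventually_elim (auto simp: complex_nonpos_Reals_iff)
qed

lemma arsinh_isCont0: "isCont (arsinh :: complex \<Rightarrow> complex) 0"
  by (rule DERIV_isCont[OF arsinh_deriv]) (simp_all add: SS_0 Re_pos_not_nonpos)

definition Hc :: "(nat \<Rightarrow> complex) \<Rightarrow> complex \<Rightarrow> complex" where
  "Hc c z = eval_fps (Fc c) (arsinh z)"

definition G1 :: "(nat \<Rightarrow> complex) \<Rightarrow> complex \<Rightarrow> complex" where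
  "G1 c z = eval_fps (fps_deriv (Fc c)) (arsinh z) / SS z"

definition G2 :: "(nat \<Rightarrow> complex) \<Rightarrow> complex \<Rightarrow> complex" where
  "G2 c z = eval_fps (fps_deriv (fps_deriv (Fc c))) (arsinh z) / SS z ^ 2
            - eval_fps (fps_deriv (Fc c)) (arsinh z) * z / SS z ^ 3"

definition Good :: "(nat \<Rightarrow> complex) \<Rightarrow> complex \<Rightarrow> bool" where
  "Good c z \<longleftrightarrow> z^2 + 1 \<notin> \<real>\<^sub>\<le>\<^sub>0 \<and> z + SS z \<notin> \<real>\<^sub>\<le>\<^sub>0 \<and>
     ereal (norm (arsinh z)) < fps_conv_radius (Fc c)"

lemma ev_Good:
  assumes "fps_conv_radius (Fc c) > 0"
  shows "eventually (Good c) (nhds 0)"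
proof -
  obtain r where r: "0 < ereal r" "ereal r < fps_conv_radius (Fc c)"
    using ereal_dense2[OF assms] by blast
  have "eventually (\<lambda>z. arsinh z \<in> ball 0 r) (nhds (0::complex))"
    by (rule ev_cont[OF arsinh_isCont0]) (use r in auto)
  with ev_good show ?thesis
  proof eventually_elim
    case (elim z)
    hence "ereal (norm (arsinh z)) < ereal r" by simp
    with r(2) elim show ?case unfolding Good_def using less_trans by blast
  qed
qed

lemma Hc_deriv:
  assumes "Good c z"
  shows "(Hc c has_field_derivative G1 c z) (at z)"
proof -
  have a: "z^2 + 1 \<notin> \<real>\<^sub>\<le>\<^sub>0" "z + SS z \<notin> \<real>\<^sub>\<le>\<^sub>0" "ereal (norm (arsinh z)) < fps_conv_radius (Fc c)"
    using assms by (auto simp: Good_def)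
  have "((\<lambda>z. eval_fps (Fc c) (arsinh z)) has_field_derivative
          eval_fps (fps_deriv (Fc c)) (arsinh z) * (1 / SS z)) (at z)"
    by (rule DERIV_chain2[OF has_field_derivative_eval_fps[OF a(3)] arsinh_deriv[OF a(1,2)]])
  thus ?thesis by (simp add: Hc_def[abs_def] G1_def)
qed

lemma G1_deriv:
  assumes "Good c z"
  shows "(G1 c has_field_derivative G2 c z) (at z)"
proof -
  have a: "z^2 + 1 \<notin> \<real>\<^sub>\<le>\<^sub>0" "z + SS z \<notin> \<real>\<^sub>\<le>\<^sub>0" "ereal (norm (arsinh z)) < fps_conv_radius (Fc c)"
    using assms by (auto simp: Good_def)
  have nz: "z^2 + 1 \<noteq> 0" using a(1) by auto
  have r: "ereal (norm (arsinh z)) < fps_conv_radius (fps_deriv (Fc c))"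
    using a(3) fps_conv_radius_deriv[of "Fc c"] by (rule less_le_trans)
  have d1: "((\<lambda>z. eval_fps (fps_deriv (Fc c)) (arsinh z)) has_field_derivative
          eval_fps (fps_deriv (fps_deriv (Fc c))) (arsinh z) * (1 / SS z)) (at z)"
    by (rule DERIV_chain2[OF has_field_derivative_eval_fps[OF r] arsinh_deriv[OF a(1,2)]])
  have "((\<lambda>z. eval_fps (fps_deriv (Fc c)) (arsinh z) / SS z) has_field_derivative
     ((eval_fps (fps_deriv (fps_deriv (Fc c))) (arsinh z) * (1 / SS z)) * SS z -
      eval_fps (fps_deriv (Fc c)) (arsinh z) * (z / SS z)) / (SS z * SS z)) (at z)"
    by (rule DERIV_divide[OF d1 SS_deriv[OF a(1)] SS_nz[OF nz]])
  moreover have "((eval_fps (fps_deriv (fps_deriv (Fc c))) (arsinh z) * (1 / SS z)) * SS z -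
      eval_fps (fps_deriv (Fc c)) (arsinh z) * (z / SS z)) / (SS z * SS z) = G2 c z"
    using SS_nz[OF nz] by (simp add: G2_def field_simps power2_eq_square power3_eq_cube)
  ultimately show ?thesis by (simp add: G1_def[abs_def])
qed

lemma ODE:
  assumes "Good c z"
  shows "(1 + z^2) * G2 c z + z * G1 c z = Hc (sh c) z"
proof -
  have nz: "z^2 + 1 \<noteq> 0" using assms by (auto simp: Good_def)
  have e: "1 + z^2 = SS z ^ 2" using SS_sq[OF nz] by simp
  show ?thesis unfolding e using SS_nz[OF nz]
    by (simp add: G1_def G2_def Hc_def Fc_deriv2 field_simps power2_eq_square power3_eq_cube)
qed

lemma Good_open:
  assumes "fps_conv_radius (Fc c) > 0"
  obtains U where "open U" "0 \<in> U" "\<And>z. z \<in> U \<Longrightarrow> Good c z"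
  using ev_Good[OF assms] unfolding eventually_nhds by blast

lemma Hc_exp:
  assumes "fps_conv_radius (Fc c) > 0"
  shows "Hc c has_fps_expansion fps_expansion (Hc c) 0"
proof -
  obtain U where U: "open U" "0 \<in> U" "\<And>z. z \<in> U \<Longrightarrow> Good c z"
    using Good_open[OF assms] by blast
  have "Hc c holomorphic_on U"
    using U by (subst holomorphic_on_open) (auto intro: Hc_deriv)
  thus ?thesis using U by (intro has_fps_expansion_fps_expansion)
qed

lemma fps_exp_unique:
  fixes f g :: "complex \<Rightarrow> complex"
  assumes "f has_fps_expansion A" "g has_fps_expansion B" "eventually (\<lambda>z. f z = g z) (nhds 0)"
  shows "A = B"
proof (rule fps_ext)
  fix n
  have "(deriv ^^ n) f 0 = (deriv ^^ n) g 0" by (rule higher_deriv_cong_ev[OF assms(3) refl])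
  thus "fps_nth A n = fps_nth B n"
    using fps_nth_fps_expansion[OF assms(1)] fps_nth_fps_expansion[OF assms(2)] by simp
qed

definition Dv :: "(nat \<Rightarrow> complex) \<Rightarrow> nat \<Rightarrow> complex" where
  "Dv c n = (deriv ^^ n) (Hc c) 0"

lemma Dv_0: "Dv c 0 = c 0"
  by (simp add: Dv_def Hc_def eval_fps_at_0 Fc_nth)

lemma Dv_rec:
  assumes "fps_conv_radius (Fc c) > 0"
  shows "Dv c (Suc (Suc n)) = Dv (sh c) n - of_nat n ^ 2 * Dv c n"
proof -
  obtain U where U: "open U" "0 \<in> U" "\<And>z. z \<in> U \<Longrightarrow> Good c z"
    using Good_open[OF assms] by blast
  define P where "P = fps_expansion (Hc c) 0"
  define Q where "Q = fps_expansion (Hc (sh c)) 0"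
  have HP: "Hc c has_fps_expansion P" unfolding P_def by (rule Hc_exp[OF assms])
  have HQ: "Hc (sh c) has_fps_expansion Q" unfolding Q_def by (rule Hc_exp[OF Fc_radius_sh[OF assms]])
  have X2: "(\<lambda>z::complex. 1 + z^2) has_fps_expansion (1 + fps_X^2)"
    by (intro has_fps_expansion_add has_fps_expansion_1 has_fps_expansion_fps_X_power)
  have e1: "(\<lambda>z. (1 + z^2) * deriv (deriv (Hc c)) z + z * deriv (Hc c) z) has_fps_expansion
             ((1 + fps_X^2) * fps_deriv (fps_deriv P) + fps_X * fps_deriv P)"
    by (intro has_fps_expansion_add has_fps_expansion_mult X2 has_fps_expansion_deriv HP
              has_fps_expansion_fps_X)
  have e2: "eventually (\<lambda>z. (1 + z^2) * deriv (deriv (Hc c)) z + z * deriv (Hc c) z = Hc (sh c) z) (nhds 0)"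
    unfolding eventually_nhds
  proof (intro exI[of _ U] conjI ballI U)
    fix z assume z: "z \<in> U"
    have d1: "deriv (Hc c) x = G1 c x" if "x \<in> U" for x
      using Hc_deriv[OF U(3)[OF that]] by (rule DERIV_imp_deriv)
    have "(deriv (Hc c) has_field_derivative G2 c z) (at z)"
      by (rule has_field_derivative_transform_within_open[OF G1_deriv[OF U(3)[OF z]] U(1) z])
         (simp add: d1)
    hence d2: "deriv (deriv (Hc c)) z = G2 c z" by (rule DERIV_imp_deriv)
    show "(1 + z^2) * deriv (deriv (Hc c)) z + z * deriv (Hc c) z = Hc (sh c) z"
      using ODE[OF U(3)[OF z]] d1[OF z] d2 by simp
  qed
  have E: "(1 + fps_X^2) * fps_deriv (fps_deriv P) + fps_X * fps_deriv P = Q"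
    by (rule fps_exp_unique[OF e1 HQ e2])
  define p where "p = fps_nth P"
  define q where "q = fps_nth Q"
  have pD: "p k = Dv c k / fact k" for k
    unfolding p_def Dv_def by (rule fps_nth_fps_expansion[OF HP])
  have qD: "q k = Dv (sh c) k / fact k" for k
    unfolding q_def Dv_def by (rule fps_nth_fps_expansion[OF HQ])
  have En: "fps_nth ((1 + fps_X^2) * fps_deriv (fps_deriv P) + fps_X * fps_deriv P) n = q n"
    using E by (simp add: q_def)
  have key: "of_nat (n+1) * of_nat (n+2) * p (n+2) + of_nat n ^ 2 * p n = q n"
  proof -
    consider "n = 0" | "n = 1" | m where "n = Suc (Suc m)" by (cases n; cases "n - 1") auto
    thus ?thesis
    proof cases
      case 1 thus ?thesis using En by (simp add: distrib_right fps_X_power_mult_nth p_def algebra_simps)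
    next
      case 2 thus ?thesis using En by (simp add: distrib_right fps_X_power_mult_nth p_def algebra_simps)
    next
      case (3 m) thus ?thesis using En
        by (simp add: distrib_right fps_X_power_mult_nth p_def algebra_simps power2_eq_square)
    qed
  qed
  have f2: "fact (n+2) = (of_nat (n+1) * of_nat (n+2) * fact n :: complex)"
    by (simp add: fact_Suc algebra_simps)
  have "Dv c (Suc (Suc n)) = Dv c (n+2)" by (simp add: numeral_2_eq_2)
  also have "\<dots> = fact (n+2) * p (n+2)" unfolding pD by (simp del: fact_Suc)
  also have "\<dots> = fact n * (of_nat (n+1) * of_nat (n+2) * p (n+2))" unfolding f2 by (simp add: algebra_simps)
  also have "of_nat (n+1) * of_nat (n+2) * p (n+2) = q n - of_nat n ^ 2 * p n"
    using key by (simp only: eq_diff_eq)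
  also have "fact n * (q n - of_nat n ^ 2 * p n) = fact n * q n - of_nat n ^ 2 * (fact n * p n)"
    by (simp add: algebra_simps)
  also have "fact n * q n = Dv (sh c) n" by (simp add: qD)
  also have "fact n * p n = Dv c n" by (simp add: pD)
  finally show ?thesis .
qed



lemma Dv_formula:
  assumes "fps_conv_radius (Fc c) > 0"
  shows "Dv c (2*n) = (\<Sum>m\<le>n. of_int (AA n m) * c m)"
  using assms
proof (induction n arbitrary: c)
  case 0
  thus ?case by (simp add: Dv_0)
next
  case (Suc n c)
  have "Dv c (2 * Suc n) = Dv c (Suc (Suc (2*n)))" by simp
  also have "\<dots> = Dv (sh c) (2*n) - of_nat (2*n) ^ 2 * Dv c (2*n)"
    by (rule Dv_rec[OF Suc.prems])
  also have "Dv (sh c) (2*n) = (\<Sum>m\<le>n. of_int (AA n m) * c (Suc m))"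
    using Suc.IH[OF Fc_radius_sh[OF Suc.prems]] by (simp add: sh_def[abs_def])
  also have "Dv c (2*n) = (\<Sum>m\<le>n. of_int (AA n m) * c m)"
    by (rule Suc.IH[OF Suc.prems])
  finally have L: "Dv c (2 * Suc n) = (\<Sum>m\<le>n. of_int (AA n m) * c (Suc m)) -
      of_nat (2*n) ^ 2 * (\<Sum>m\<le>n. of_int (AA n m) * c m)" .
  have "(\<Sum>m\<le>Suc n. of_int (AA (Suc n) m) * c m) =
      (\<Sum>m\<le>Suc n. of_int (if m = 0 then 0 else AA n (m-1)) * c m) -
      of_int (4 * int n ^ 2) * (\<Sum>m\<le>Suc n. of_int (AA n m) * c m)"
    by (simp add: sum_distrib_left sum_subtractf algebra_simps)
  also have "(\<Sum>m\<le>Suc n. of_int (if m = 0 then 0 else AA n (m-1)) * c m) =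
      (\<Sum>m\<le>n. of_int (AA n m) * c (Suc m))"
    by (subst sum.atMost_Suc_shift) simp
  also have "(\<Sum>m\<le>Suc n. of_int (AA n m) * c m) = (\<Sum>m\<le>n. of_int (AA n m) * c m)"
    by (simp add: AA_gt)
  finally show ?case unfolding L by (simp add: power_mult_distrib)
qed



lemma bridge:
  fixes f :: "real \<Rightarrow> real" and g :: "complex \<Rightarrow> complex"
  assumes r: "r > 0" and hol: "g holomorphic_on ball 0 r"
    and eq: "\<And>x. \<bar>x\<bar> < r \<Longrightarrow> g (of_real x) = of_real (f x)"
  shows "\<bar>x\<bar> < r \<Longrightarrow> (deriv ^^ n) g (of_real x) = of_real ((deriv ^^ n) f x)"
proof (induction n arbitrary: x)
  case 0
  thus ?case using eq by simp
next
  case (Suc n x)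
  define gn where "gn = (deriv ^^ n) g"
  define fn where "fn = (deriv ^^ n) f"
  have holn: "gn holomorphic_on ball 0 r" unfolding gn_def by (rule holomorphic_higher_deriv[OF hol open_ball])
  have xin: "complex_of_real x \<in> ball 0 r" using Suc.prems by simp
  have dg: "(gn has_field_derivative deriv gn (of_real x)) (at (of_real x))"
    by (rule holomorphic_derivI[OF holn open_ball xin])
  have v: "((\<lambda>t. gn (of_real t)) has_vector_derivative deriv gn (of_real x)) (at x)"
    by (rule has_vector_derivative_real_field[OF dg])
  have v2: "((\<lambda>t. complex_of_real (fn t)) has_vector_derivative deriv gn (of_real x)) (at x)"
  proof (rule has_vector_derivative_transform_within_open[OF v, of "{-r<..<r}"])
    show "x \<in> {-r<..<r}" using Suc.prems by auto
    fix y assume "y \<in> {-r<..<r}"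
    hence "\<bar>y\<bar> < r" by auto
    thus "gn (complex_of_real y) = complex_of_real (fn y)" using Suc.IH by (simp add: gn_def fn_def)
  qed simp
  define d where "d = deriv gn (of_real x)"
  have dre: "(fn has_field_derivative Re d) (at x)"
    using has_field_derivative_Re[OF v2] by (simp add: d_def)
  have "((\<lambda>t. 0::real) has_field_derivative Im d) (at x)"
    using has_field_derivative_Im[OF v2] by (simp add: d_def)
  hence "Im d = 0" by (rule DERIV_unique[OF _ DERIV_const])
  hence "d = of_real (Re d)" by (simp add: complex_eq_iff)
  moreover have "(deriv ^^ Suc n) f x = Re d" using DERIV_imp_deriv[OF dre] by (simp add: fn_def)
  moreover have "(deriv ^^ Suc n) g (of_real x) = d" by (simp add: d_def gn_def)
  ultimately show ?case by simp
qed

definition cc :: "int \<Rightarrow> nat \<Rightarrow> complex" where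
  "cc k m = complex_of_real (1 / (real (2*m+1) powi k))"

lemma le_3_pow: "real (2*m+1) \<le> 3 ^ m"
  by (induction m) auto

lemma cc_bound: "norm (cc k m) \<le> (3 ^ nat \<bar>k\<bar>) ^ m"
proof -
  define x where "x = real (2*m+1)"
  have x1: "x \<ge> 1" by (simp add: x_def)
  have K1: "(1::real) \<le> (3 ^ nat \<bar>k\<bar>) ^ m" by (intro one_le_power) simp
  have "norm (cc k m) = \<bar>1 / (x powi k)\<bar>" by (simp only: cc_def x_def norm_of_real)
  also have "\<dots> \<le> (3 ^ nat \<bar>k\<bar>) ^ m"
  proof (cases "k \<ge> 0")
    case True
    have "x powi k = x ^ nat k" using True by (simp add: power_int_def)
    moreover have "x ^ nat k \<ge> 1" using x1 by (rule one_le_power)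
    ultimately have "\<bar>1 / (x powi k)\<bar> \<le> 1" by simp
    thus ?thesis using K1 by linarith
  next
    case False
    have "1 / (x powi k) = x ^ nat (-k)" using False x1 by (simp add: power_int_def power_inverse divide_inverse)
    also have "\<dots> \<le> (3 ^ m) ^ nat (-k)" 
      by (rule power_mono) (use x1 le_3_pow[of m] in \<open>auto simp: x_def\<close>)
    also have "\<dots> = (3 ^ nat \<bar>k\<bar>) ^ m" using False by (simp flip: power_mult add: mult.commute)
    finally show ?thesis using x1 by simp
  qed
  finally show ?thesis .
qed

lemma Fc_radius_inf:
  assumes K: "K \<ge> 1" and b: "\<And>m. norm (c m) \<le> K ^ m"
  shows "fps_conv_radius (Fc c) = \<infinity>"
  unfolding fps_conv_radius_def
proof (rule conv_radius_inftyI'')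
  fix z :: complex
  have bn: "norm (fps_nth (Fc c) n * z ^ n) \<le> (K * norm z) ^ n / fact n" for n
  proof (cases "even n")
    case True
    then obtain m where n: "n = 2*m" by blast
    have "norm (fps_nth (Fc c) n * z ^ n) = norm (c m) * norm z ^ n / fact n"
      using n by (simp add: Fc_nth norm_mult norm_divide norm_power)
    also have "\<dots> \<le> K ^ m * norm z ^ n / fact n"
      by (intro divide_right_mono mult_right_mono b) auto
    also have "K ^ m \<le> K ^ n" using K n by (intro power_increasing) auto
    hence "K ^ m * norm z ^ n / fact n \<le> K ^ n * norm z ^ n / fact n"
      by (intro divide_right_mono mult_right_mono) auto
    finally show ?thesis by (simp add: power_mult_distrib)
  next
    case False
    thus ?thesis using K by (simp add: Fc_nth)
  qed
  have "summable (\<lambda>n. (K * norm z) ^ n / fact n)"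
    using summable_exp[of "K * norm z"] by (simp add: field_simps)
  hence "summable (\<lambda>n. norm (fps_nth (Fc c) n * z ^ n))"
    by (rule summable_comparison_test'[where N=0]) (use bn in auto)
  thus "summable (\<lambda>n. fps_nth (Fc c) n * z ^ n)" by (rule summable_norm_cancel)
qed

lemma cc_radius: "fps_conv_radius (Fc (cc k)) = \<infinity>"
  by (rule Fc_radius_inf[OF _ cc_bound]) simp



lemma arsinh_of_real: "arsinh (complex_of_real x) = complex_of_real (arsinh x)"
proof -
  have "(complex_of_real x)^2 + 1 = complex_of_real (x^2 + 1)" by simp
  moreover have "complex_of_real (x^2 + 1) powr complex_of_real (1/2) = complex_of_real (sqrt (x^2+1))"
    by (subst powr_of_real) (auto simp: powr_half_sqrt)
  ultimately have "arsinh (complex_of_real x) = Ln (complex_of_real (x + sqrt (x^2+1)))"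
    unfolding arsinh_def by simp
  also have "\<dots> = complex_of_real (ln (x + sqrt (x^2+1)))"
    by (rule Ln_of_real[OF arsinh_real_aux])
  finally show ?thesis by (simp add: arsinh_real_def)
qed

lemma eval_Fc_real: "eval_fps (Fc (cc k)) (complex_of_real y) = complex_of_real (Lif2 k y)"
proof -
  define b where "b = (\<lambda>n. if even n then y ^ n / (fact n * real (n+1) powi k) else 0)"
  have tb: "fps_nth (Fc (cc k)) n * (complex_of_real y) ^ n = complex_of_real (b n)" for n
  proof (cases "even n")
    case True
    hence "2 * (n div 2) + 1 = n + 1" by simp
    thus ?thesis using True by (simp add: Fc_nth cc_def b_def field_simps)
  qed (simp add: Fc_nth b_def)
  have "summable (\<lambda>n. fps_nth (Fc (cc k)) n * (complex_of_real y) ^ n)"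
    using cc_radius[of k] unfolding fps_conv_radius_def
    by (intro summable_in_conv_radius) simp
  hence "summable (\<lambda>n. complex_of_real (b n))" by (simp add: tb)
  hence sb: "summable b" by (simp add: summable_of_real_iff)
  hence "(\<lambda>n. complex_of_real (b n)) sums complex_of_real (suminf b)"
    by (intro sums_of_real summable_sums)
  hence e1: "eval_fps (Fc (cc k)) (complex_of_real y) = complex_of_real (suminf b)"
    by (simp add: eval_fps_def tb sums_iff)
  have "(\<lambda>m. b (2*m)) sums suminf b \<longleftrightarrow> b sums suminf b"
    by (rule sums_mono_reindex) (auto simp: strict_mono_def b_def image_def elim!: oddE)
  hence "(\<lambda>m. b (2*m)) sums suminf b" using summable_sums[OF sb] by simp
  moreover have "(\<lambda>m. b (2*m)) = (\<lambda>m. y ^ (2*m) / (fact (2*m) * (real (2*m+1)) powi k))"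
    by (simp add: b_def fun_eq_iff)
  ultimately have "Lif2 k y = suminf b" unfolding Lif2_def by (simp add: sums_iff)
  thus ?thesis using e1 by simp
qed

lemma Hc_real: "Hc (cc k) (complex_of_real x) = complex_of_real (Lif2 k (arsinh x))"
  by (simp add: Hc_def arsinh_of_real eval_Fc_real)

lemma main_sum:
  assumes "n \<ge> 1"
  shows "polyCauchy2 (2*n) k = (\<Sum>m\<le>n. real_of_int (AA n m) / (real (2*m+1)) powi k)"
proof -
  have rad: "fps_conv_radius (Fc (cc k)) > 0" by (simp add: cc_radius)
  obtain U where U: "open U" "0 \<in> U" "\<And>z. z \<in> U \<Longrightarrow> Good (cc k) z"
    using Good_open[OF rad] by blast
  obtain r where r: "r > 0" "ball 0 r \<subseteq> U" using U(1,2) open_contains_ball by blast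
  have "Hc (cc k) holomorphic_on U"
    using U by (subst holomorphic_on_open) (auto intro: Hc_deriv)
  hence hol: "Hc (cc k) holomorphic_on ball 0 r" using r(2) by (rule holomorphic_on_subset)
  have "(deriv ^^ (2*n)) (Hc (cc k)) (complex_of_real 0) =
        complex_of_real ((deriv ^^ (2*n)) (\<lambda>t. Lif2 k (arsinh t)) 0)"
    by (rule bridge[OF r(1) hol]) (use r(1) Hc_real in auto)
  hence "complex_of_real (polyCauchy2 (2*n) k) = Dv (cc k) (2*n)"
    by (simp add: polyCauchy2_def Dv_def)
  also have "\<dots> = (\<Sum>m\<le>n. of_int (AA n m) * cc k m)" by (rule Dv_formula[OF rad])
  also have "\<dots> = complex_of_real (\<Sum>m\<le>n. real_of_int (AA n m) / (real (2*m+1)) powi k)"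
    by (simp add: cc_def divide_inverse)
  finally show ?thesis by (simp only: of_real_eq_iff)
qed

theorem theorem1:
  fixes n :: nat and k :: int
  assumes "n \<ge> 1"
  shows "polyCauchy2 (2*n) k =
    (\<Sum>m=1..n. (-4) ^ (n-m) / (real (2*m+1)) powi k * real_of_int (dstirling n m))"
proof -
  have "polyCauchy2 (2*n) k = (\<Sum>m\<le>n. real_of_int (AA n m) / (real (2*m+1)) powi k)"
    by (rule main_sum[OF assms])
  also have "{..n} = insert 0 {1..n}" by auto
  also have "(\<Sum>m\<in>insert 0 {1..n}. real_of_int (AA n m) / (real (2*m+1)) powi k) =
      (\<Sum>m=1..n. real_of_int (AA n m) / (real (2*m+1)) powi k)"
    using AA_0[OF assms] by (simp add: sum.insert)
  also have "\<dots> = (\<Sum>m=1..n. (-4) ^ (n-m) / (real (2*m+1)) powi k * real_of_int (dstirling n m))"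
    by (intro sum.cong refl) (use assms in \<open>auto simp: AA_formula\<close>)
  finally show ?thesis .
qed

end
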